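(* Let $q$ be a prime power, and let $m$ and $j$ be positive integers with $m>1$, $1\le j\le m-1$ and $\gcd(j,q-1)=1$. Let $\lambda_j(x)=\sum_{0\le i_1<i_2<\cdots<i_j\le m-1}x^{q^{i_1}+\cdots+q^{i_j}}$ and let $h(x)\in\mathbf{F}_q[x]$. Then $x\,h(\lambda_j(x))$ is a permutation polynomial of $\mathbf{F}_{q^m}$ if and only if $h(0)\ne 0$ and $x\,h(x)^j$ permutes $\mathbf{F}_q$.
   Context: $\lambda_j(x)$ is the $j$-th elementary symmetric polynomial $\sigma_j$ evaluated at $x,x^q,\ldots,x^{q^{m-1}}$; it lies in $\mathbf{F}_q[x]$ and takes values in $\mathbf{F}_q$ on $\mathbf{F}_{q^m}$. A permutation polynomial of a finite field $K$ is a polynomial inducing a bijection $K\to K$. *)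

theory Defs
  imports "HOL-Computational_Algebra.Polynomial" "HOL-Computational_Algebra.Primes"
begin

definition prime_power :: "nat \<Rightarrow> bool" where
  "prime_power q \<longleftrightarrow> (\<exists>p k. prime p \<and> k > 0 \<and> q = p ^ k)"

text \<open>The subfield F_q of a finite field K with q^m elements: the roots of x^q - x.\<close>
definition subfield_Fq :: "nat \<Rightarrow> 'a::field set" where
  "subfield_Fq q = {x. x ^ q = x}"

definition lambda_poly :: "nat \<Rightarrow> nat \<Rightarrow> nat \<Rightarrow> 'a::comm_ring_1 poly" where
  "lambda_poly q m j = (\<Sum>S\<in>{S. S \<subseteq> {0..<m} \<and> card S = j}. monom 1 (\<Sum>i\<in>S. q ^ i))"

definition permutes_set :: "'a::comm_ring_1 poly \<Rightarrow> 'a set \<Rightarrow> bool" where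
  "permutes_set f K \<longleftrightarrow> bij_betw (poly f) K K"

end

theory Submission
  imports Defs
begin


lemma pow_card_same:
  fixes x :: "'a::{field,finite}"
  shows "x ^ card (UNIV :: 'a set) = x"
proof (cases "x = 0")
  case False
  have "x * (\<Prod>y\<in>UNIV-{0}. x * y) = x * x ^ (card (UNIV :: 'a set) - 1) * \<Prod>(UNIV-{0})"
    by (simp add: prod.distrib mult_ac)
  also have "x * x ^ (card (UNIV :: 'a set) - 1) = x ^ Suc (card (UNIV :: 'a set) - 1)"
    by (subst power_Suc) auto
  also have "Suc (card (UNIV :: 'a set) - 1) = card (UNIV :: 'a set)"
    using finite_UNIV_card_ge_0[where ?'a = 'a] by simp
  also have "(\<Prod>y\<in>UNIV-{0}. x * y) = (\<Prod>y\<in>UNIV-{0}. y)"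
    by (rule prod.reindex_bij_witness[of _ "\<lambda>y. y / x" "\<lambda>y. x * y"]) (use False in auto)
  finally show ?thesis
    by simp
qed (use finite_UNIV_card_ge_0[where ?'a = 'a] in auto)

lemma CHAR_dvd_card_field:
  "CHAR('a::{field,finite}) dvd card (UNIV :: 'a set)"
proof -
  define c where "c = CHAR('a)"
  have c0: "c > 0" unfolding c_def by (intro finite_imp_CHAR_pos) simp
  define H where "H = range (of_nat :: nat \<Rightarrow> 'a)"
  have ofc: "(of_nat (c * k) :: 'a) = 0" for k unfolding c_def by simp
  have modc: "(of_nat n :: 'a) = of_nat (n mod c)" for n
  proof -
    have "(of_nat n :: 'a) = of_nat (n mod c + c * (n div c))" by simp
    also have "\<dots> = of_nat (n mod c)" by (simp only: of_nat_add ofc) simp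
    finally show ?thesis .
  qed
  have H_eq: "H = of_nat ` {..<c}"
  proof
    show "H \<subseteq> of_nat ` {..<c}"
    proof
      fix x assume "x \<in> H"
      then obtain n where "x = of_nat n" unfolding H_def by auto
      then have "x = of_nat (n mod c)" using modc by simp
      moreover have "n mod c \<in> {..<c}" using c0 by simp
      ultimately show "x \<in> of_nat ` {..<c}" by blast
    qed
  qed (auto simp: H_def)
  have cardH: "card H = c"
  proof -
    have "inj_on (of_nat :: nat \<Rightarrow> 'a) {..<c}"
    proof (rule inj_onI)
      fix a b assume ab: "a \<in> {..<c}" "b \<in> {..<c}" "(of_nat a :: 'a) = of_nat b"
      show "a = b"
      proof (rule ccontr)
        assume "a \<noteq> b"
        then consider "a < b" | "b < a" by linarith
        then show False
        proof cases
          case 1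
          have "(of_nat (b - a) :: 'a) = 0" using ab 1 by (simp add: of_nat_diff)
          then have "c dvd (b - a)" unfolding c_def by (simp add: of_nat_eq_0_iff_char_dvd)
          then show False using 1 ab by (meson diff_le_self dvd_imp_le lessThan_iff not_le zero_less_diff le_less_trans)
        next
          case 2
          have "(of_nat (a - b) :: 'a) = 0" using ab 2 by (simp add: of_nat_diff)
          then have "c dvd (a - b)" unfolding c_def by (simp add: of_nat_eq_0_iff_char_dvd)
          then show False using 2 ab by (meson diff_le_self dvd_imp_le lessThan_iff not_le zero_less_diff le_less_trans)
        qed
      qed
    qed
    then show ?thesis unfolding H_eq by (simp add: card_image)
  qed
  have Hadd: "a \<in> H \<Longrightarrow> b \<in> H \<Longrightarrow> a + b \<in> H" for a b
    unfolding H_def by (auto simp flip: of_nat_add)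
  have Hneg: "a \<in> H \<Longrightarrow> - a \<in> H" for a
  proof -
    assume "a \<in> H"
    then obtain n where n: "a = of_nat n" unfolding H_def by auto
    have "(of_nat n :: 'a) + of_nat ((c - 1) * n) = of_nat (c * n)"
      using c0 by (simp flip: of_nat_add add: algebra_simps)
    also have "\<dots> = 0" by (rule ofc)
    finally have "- a = of_nat ((c - 1) * n)" using n by (metis add.commute add_eq_0_iff)
    then show "- a \<in> H" unfolding H_def by (metis rangeI)
  qed
  define co where "co x = (\<lambda>y. x + y) ` H" for x
  have memco: "z \<in> co x \<longleftrightarrow> z - x \<in> H" for z x
    unfolding co_def by (auto intro: image_eqI[where x="z - x"])
  have cardco: "card (co x) = c" for x
    unfolding co_def using cardH by (simp add: card_image inj_on_def)
  have disj: "co x \<inter> co y \<noteq> {} \<Longrightarrow> co x = co y" for x y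
  proof -
    assume "co x \<inter> co y \<noteq> {}"
    then obtain z where z: "z - x \<in> H" "z - y \<in> H" using memco by blast
    have yx: "y - x \<in> H" using Hadd[OF z(1) Hneg[OF z(2)]] by (simp add: algebra_simps)
    have xy: "x - y \<in> H" using Hneg[OF yx] by simp
    show "co x = co y"
    proof (rule set_eqI)
      fix w
      have "w - y \<in> H \<Longrightarrow> w - x \<in> H" using Hadd[OF _ yx, of "w - y"] by (simp add: algebra_simps)
      moreover have "w - x \<in> H \<Longrightarrow> w - y \<in> H" using Hadd[OF _ xy, of "w - x"] by (simp add: algebra_simps)
      ultimately show "w \<in> co x \<longleftrightarrow> w \<in> co y" using memco by blast
    qed
  qed
  have U: "\<Union>(range co) = UNIV"
  proof (intro set_eqI iffI)
    fix x :: 'a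
    have "x \<in> co x" unfolding memco H_def by (simp add: image_iff) (metis of_nat_0)
    then show "x \<in> \<Union>(range co)" by blast
  qed auto
  have "c * card (range co) = card (\<Union>(range co))"
    by (rule card_partition) (use cardco disj in auto)
  then show ?thesis unfolding U c_def by (metis dvd_triv_left)
qed

lemma char_setup:
  assumes "prime_power q" "card (UNIV :: 'a::{field,finite} set) = q ^ m" "m > 0"
  shows "prime CHAR('a) \<and> (\<exists>k. q = CHAR('a) ^ k)"
proof -
  obtain p k where pk: "prime p" "k > 0" "q = p ^ k" using assms(1) unfolding prime_power_def by blast
  have cp: "prime CHAR('a)"
    by (intro prime_CHAR_semidom finite_imp_CHAR_pos) simp
  have "CHAR('a) dvd p ^ (k * m)" using CHAR_dvd_card_field[where 'a='a] assms(2) pk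
    by (simp add: power_mult)
  then have "CHAR('a) dvd p" using cp prime_dvd_power by blast
  then have "CHAR('a) = p" using cp pk(1) by (simp add: primes_dvd_imp_eq)
  then show ?thesis using cp pk by blast
qed

lemma geom_nat: "(q - 1) * (\<Sum>i<m. q ^ i) + 1 = (q::nat) ^ m" if "q \<ge> 1"
proof (induction m)
  case 0 then show ?case by simp
next
  case (Suc m)
  have "(q - 1) * (\<Sum>i<Suc m. q ^ i) + 1 = ((q - 1) * (\<Sum>i<m. q ^ i) + 1) + (q-1) * q^m"
    by (simp add: algebra_simps)
  also have "\<dots> = q^m + (q-1)*q^m" using Suc by simp
  also have "\<dots> = q ^ Suc m" using that by (cases q) (auto simp: algebra_simps)
  finally show ?case .
qed

lemma esum_le_geom: "S \<subseteq> {..<m} \<Longrightarrow> (\<Sum>i\<in>S. (q::nat) ^ i) \<le> (\<Sum>i<m. q ^ i)"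
  by (rule sum_mono2) auto

lemma esum_lt: assumes "S \<subseteq> {..<m}" "(q::nat) \<ge> 2" shows "(\<Sum>i\<in>S. q ^ i) < q ^ m"
proof -
  have "(\<Sum>i\<in>S. q ^ i) \<le> (\<Sum>i<m. q ^ i)" using esum_le_geom[OF assms(1)] .
  also have "(\<Sum>i<m. q ^ i) \<le> (q - 1) * (\<Sum>i<m. q ^ i)" using mult_le_mono1[of 1 "q-1" "\<Sum>i<m. q ^ i"] assms(2) by (simp only: mult_1)
  also have "\<dots> < q ^ m" using geom_nat[of q m] assms(2) by simp
  finally show ?thesis .
qed

lemma esum_proper: assumes "S \<subseteq> {..<m}" "card S < m" "(q::nat) \<ge> 1"
  shows "(\<Sum>i\<in>S. q ^ i) + 1 \<le> (\<Sum>i<m. q ^ i)"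
proof -
  have "S \<noteq> {..<m}" using assms(2) by auto
  then obtain k where k: "k \<in> {..<m} - S" using assms(1) by blast
  have "(\<Sum>i<m. q ^ i) = (\<Sum>i\<in>{..<m} - S. q ^ i) + (\<Sum>i\<in>S. q ^ i)"
    using assms(1) by (simp add: sum.subset_diff)
  moreover have "(\<Sum>i\<in>{..<m} - S. q ^ i) \<ge> q ^ k"
    using k by (intro member_le_sum) auto
  moreover have "q ^ k \<ge> 1" using assms(3) by simp
  ultimately show ?thesis by linarith
qed

lemma esum_inj: assumes "(q::nat) \<ge> 2"
  shows "S \<subseteq> {..<m} \<Longrightarrow> T \<subseteq> {..<m} \<Longrightarrow> (\<Sum>i\<in>S. q ^ i) = (\<Sum>i\<in>T. q ^ i) \<Longrightarrow> S = T"
proof (induction m arbitrary: S T)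
  case 0 then show ?case by simp
next
  case (Suc m)
  define S' where "S' = S - {m}"
  define T' where "T' = T - {m}"
  have S': "S' \<subseteq> {..<m}" using Suc.prems unfolding S'_def by auto
  have T': "T' \<subseteq> {..<m}" using Suc.prems unfolding T'_def by auto
  have fS: "finite S" using Suc.prems finite_subset by blast
  have fT: "finite T" using Suc.prems finite_subset by blast
  have eS: "(\<Sum>i\<in>S. q ^ i) = (if m \<in> S then q ^ m else 0) + (\<Sum>i\<in>S'. q ^ i)"
    using fS unfolding S'_def by (simp add: sum.remove sum_diff1)
  have eT: "(\<Sum>i\<in>T. q ^ i) = (if m \<in> T then q ^ m else 0) + (\<Sum>i\<in>T'. q ^ i)"
    using fT unfolding T'_def by (simp add: sum.remove sum_diff1)
  have lS: "(\<Sum>i\<in>S'. q ^ i) < q ^ m" using esum_lt[OF S' assms] .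
  have lT: "(\<Sum>i\<in>T'. q ^ i) < q ^ m" using esum_lt[OF T' assms] .
  have mm: "(m \<in> S) = (m \<in> T)"
    using Suc.prems(3) eS eT lS lT by (auto split: if_splits)
  then have "(\<Sum>i\<in>S'. q ^ i) = (\<Sum>i\<in>T'. q ^ i)" using Suc.prems(3) eS eT by auto
  then have "S' = T'" using Suc.IH S' T' by blast
  then show ?case using mm unfolding S'_def T'_def by blast
qed



locale ctx =
  fixes q m j :: nat and h :: "'a::{field,finite} poly"
  assumes pp: "prime_power q"
    and card: "card (UNIV :: 'a set) = q ^ m"
    and m1: "m > 1" and j1: "1 \<le> j" and jm: "j \<le> m - 1"
    and gj: "gcd j (q - 1) = 1"
    and hF: "\<forall>i. coeff h i \<in> subfield_Fq q"
begin

abbreviation "F \<equiv> (subfield_Fq q :: 'a set)"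
abbreviation "J \<equiv> {S. S \<subseteq> {0..<m} \<and> card S = j}"
definition L :: "'a \<Rightarrow> 'a" where "L x = poly (lambda_poly q m j) x"

lemma q2: "q \<ge> 2"
  using pp unfolding prime_power_def
  by (metis One_nat_def Suc_1 Suc_leI le_trans less_one not_less prime_ge_2_nat
      self_le_power zero_less_power nat_less_le)

lemma charq: "prime CHAR('a)" "\<exists>k. q = CHAR('a) ^ k"
  using char_setup[OF pp card] m1 by auto

lemma frob_add: "(x + y :: 'a) ^ q = x ^ q + y ^ q"
  using charq freshmans_dream' by blast

lemma frob_sum: "(sum f A :: 'a) ^ q = sum (\<lambda>i. f i ^ q) A"
  using charq freshmans_dream_sum' by blast

lemma xqm: "(x::'a) ^ (q ^ m) = x"
  using pow_card_same[of x] card by simp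

lemma F_iff: "x \<in> F \<longleftrightarrow> x ^ q = x" by (simp add: subfield_Fq_def)

lemma F_0: "0 \<in> F" using q2 by (simp add: F_iff)
lemma F_1: "1 \<in> F" by (simp add: F_iff)
lemma F_add: "a \<in> F \<Longrightarrow> b \<in> F \<Longrightarrow> a + b \<in> F" by (simp add: F_iff frob_add)
lemma F_mult: "a \<in> F \<Longrightarrow> b \<in> F \<Longrightarrow> a * b \<in> F" by (simp add: F_iff power_mult_distrib)
lemma F_inv: "a \<in> F \<Longrightarrow> inverse a \<in> F" by (simp add: F_iff power_inverse)
lemma F_div: "a \<in> F \<Longrightarrow> b \<in> F \<Longrightarrow> a / b \<in> F" by (simp add: divide_inverse F_mult F_inv)
lemma F_pow: "a \<in> F \<Longrightarrow> a ^ n \<in> F"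
  by (induction n) (auto simp: F_1 F_mult)
lemma F_sum: "(\<And>i. i \<in> A \<Longrightarrow> f i \<in> F) \<Longrightarrow> sum f A \<in> F"
  by (simp add: F_iff frob_sum)
lemma F_poly: "y \<in> F \<Longrightarrow> poly h y \<in> F"
  by (subst poly_altdef) (intro F_sum F_mult F_pow, use hF in auto)

lemma F_pow_qi: "c \<in> F \<Longrightarrow> c ^ (q ^ i) = c"
  by (induction i) (auto simp: F_iff power_mult)

lemma poly_lam: "L x = (\<Sum>S\<in>J. x ^ (\<Sum>i\<in>S. q ^ i))"
  unfolding L_def lambda_poly_def by (simp add: poly_sum poly_monom)

lemma coeff_lam: "coeff (lambda_poly q m j :: 'a poly) n = (\<Sum>S\<in>J. if (\<Sum>i\<in>S. q ^ i) = n then 1 else 0)"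
  unfolding lambda_poly_def by (simp add: coeff_sum coeff_monom)

lemma finJ: "finite J" by (rule finite_subset[of _ "Pow {0..<m}"]) auto

lemma m0: "m > 0" using m1 by simp

definition sig :: "nat \<Rightarrow> nat" where "sig i = Suc i mod m"

lemma sig_inj: "inj_on sig {0..<m}"
proof (rule inj_onI)
  fix a b assume ab: "a \<in> {0..<m}" "b \<in> {0..<m}" "sig a = sig b"
  show "a = b"
  proof (cases "Suc a = m"; cases "Suc b = m")
  qed (use ab in \<open>auto simp: sig_def\<close>)
qed

lemma sig_into: "sig i \<in> {0..<m}" using m0 by (simp add: sig_def)

lemma sigJ: "image sig ` J = J"
proof (rule endo_inj_surj[OF finJ])
  show "image sig ` J \<subseteq> J"
  proof
    fix T assume "T \<in> image sig ` J"
    then obtain S where S: "S \<in> J" "T = sig ` S" by blast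
    have "card (sig ` S) = card S"
      using S sig_inj by (intro card_image) (auto intro: inj_on_subset)
    then show "T \<in> J" using S sig_into by auto
  qed
  show "inj_on (image sig) J"
    using inj_on_image_Pow[OF sig_inj] by (rule inj_on_subset) auto
qed

lemma pow_sig: "i \<in> {0..<m} \<Longrightarrow> ((x::'a) ^ (q ^ i)) ^ q = x ^ (q ^ sig i)"
proof -
  assume i: "i \<in> {0..<m}"
  have "(x ^ (q ^ i)) ^ q = x ^ (q ^ Suc i)" by (simp add: power_mult[symmetric] mult.commute)
  also have "\<dots> = x ^ (q ^ sig i)"
  proof (cases "Suc i = m")
    case True then show ?thesis using xqm by (simp add: sig_def)
  next
    case False then have "Suc i < m" using i by auto
    then show ?thesis by (simp add: sig_def)
  qed
  finally show ?thesis .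
qed

lemma L_F: "L x \<in> F"
proof -
  define G where "G T = (\<Prod>i\<in>T. x ^ (q ^ i))" for T
  have LG: "L x = (\<Sum>S\<in>J. G S)" unfolding poly_lam G_def by (simp add: power_sum)
  have "L x ^ q = (\<Sum>S\<in>J. G S ^ q)" unfolding LG by (rule frob_sum)
  also have "\<dots> = (\<Sum>S\<in>J. G (sig ` S))"
  proof (rule sum.cong[OF refl])
    fix S assume S: "S \<in> J"
    have "G S ^ q = (\<Prod>i\<in>S. x ^ (q ^ sig i))"
      unfolding G_def prod_power_distrib using S by (intro prod.cong) (auto simp: pow_sig)
    also have "\<dots> = G (sig ` S)"
      unfolding G_def using S sig_inj by (subst prod.reindex) (auto intro: inj_on_subset)
    finally show "G S ^ q = G (sig ` S)" .
  qed
  also have "\<dots> = (\<Sum>T\<in>image sig ` J. G T)"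
    using inj_on_image_Pow[OF sig_inj] by (subst sum.reindex) (auto intro: inj_on_subset)
  also have "\<dots> = L x" unfolding sigJ LG ..
  finally show ?thesis by (simp add: F_iff)
qed

lemma L_hom: "c \<in> F \<Longrightarrow> L (c * x) = c ^ j * L x"
proof -
  assume c: "c \<in> F"
  have "c ^ (\<Sum>i\<in>S. q ^ i) = c ^ j" if "S \<in> J" for S
  proof -
    have "c ^ (\<Sum>i\<in>S. q ^ i) = (\<Prod>i\<in>S. c)" by (simp add: power_sum F_pow_qi[OF c])
    then show ?thesis using that by simp
  qed
  then show ?thesis unfolding poly_lam
    by (simp add: power_mult_distrib sum_distrib_left)
qed

lemma L_0: "L 0 = 0"
proof -
  have "(0::'a) ^ (\<Sum>i\<in>S. q ^ i) = 0" if "S \<in> J" for S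
  proof -
    have fS: "finite S" using that finite_subset by blast
    have "S \<noteq> {}" using that j1 by auto
    then obtain i where "i \<in> S" by blast
    then have "(\<Sum>i\<in>S. q ^ i) \<ge> q ^ i" using fS by (intro member_le_sum) auto
    moreover have "q ^ i > 0" using q2 by simp
    ultimately have "(\<Sum>i\<in>S. q ^ i) > 0" by linarith
    then show ?thesis by simp
  qed
  then show ?thesis unfolding poly_lam by (intro sum.neutral) blast
qed

lemma pow_j_inj: assumes "c \<in> F" "d \<in> F" "c \<noteq> 0" "d \<noteq> 0" "c ^ j = d ^ j" shows "c = d"
proof -
  define e where "e = c / d"
  have eF: "e \<in> F" unfolding e_def using assms by (simp add: F_div)
  have e0: "e \<noteq> 0" unfolding e_def using assms by simp
  have ej: "e ^ j = 1" unfolding e_def using assms by (simp add: power_divide)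
  have "e * e ^ (q - 1) = e * 1" using eF q2 by (simp add: F_iff flip: power_Suc)
  then have eq: "e ^ (q - 1) = 1" using e0 by simp
  obtain u v where uv: "j * u = (q - 1) * v + gcd j (q - 1)" using bezout_nat[of j "q - 1"] j1 by auto
  have "1 = (e ^ j) ^ u" using ej by simp
  also have "\<dots> = e ^ ((q - 1) * v + 1)" using uv gj by (simp flip: power_mult)
  also have "\<dots> = e" using eq by (simp add: power_mult)
  finally have "e = 1" by simp
  then show ?thesis unfolding e_def using assms by simp
qed


end

context ctx begin
abbreviation "Lam \<equiv> (lambda_poly q m j :: 'a poly)"
abbreviation "GS \<equiv> (\<Sum>i<m. q ^ i)"

lemma deg_lam: "degree Lam + 1 \<le> GS"
proof -
  have "degree Lam \<le> GS - 1"
    unfolding lambda_poly_def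
  proof (rule degree_sum_le[OF finJ])
    fix S assume S: "S \<in> J"
    have "S \<subseteq> {..<m}" using S by auto
    moreover have "card S < m" using S jm m1 by auto
    ultimately have "(\<Sum>i\<in>S. q ^ i) + 1 \<le> GS" using esum_proper q2 by auto
    then show "degree (monom (1::'a) (\<Sum>i\<in>S. q ^ i)) \<le> GS - 1"
      by (simp add: degree_monom_eq)
  qed
  moreover have "GS \<ge> q ^ 0" using m0 by (intro member_le_sum) auto
  ultimately show ?thesis by simp
qed

lemma geomq: "(q - 1) * GS + 1 = q ^ m" using geom_nat[of q m] q2 by simp

lemma exists_zero: "\<exists>x. x \<noteq> 0 \<and> L x = 0"
proof (rule ccontr)
  assume "\<not> ?thesis"
  then have nz: "L x \<noteq> 0" if "x \<noteq> 0" for x using that by blast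
  define P where "P = Lam ^ (q - 1) - 1"
  have rootP: "poly P x = 0" if "x \<noteq> 0" for x
  proof -
    have "L x * L x ^ (q - 1) = L x * 1" using L_F[of x] q2 by (simp add: F_iff flip: power_Suc)
    then have "L x ^ (q - 1) = 1" using nz[OF that] by simp
    then show ?thesis unfolding P_def by (simp add: L_def)
  qed
  have "poly P 0 = - 1" unfolding P_def using L_0 q2 by (simp add: L_def)
  then have P0: "P \<noteq> 0" by auto
  have "UNIV - {0} \<subseteq> {x. poly P x = 0}" using rootP by auto
  then have "card (UNIV - {0::'a}) \<le> card {x. poly P x = 0}" by (intro card_mono) auto
  also have "\<dots> \<le> degree P" by (rule card_poly_roots_bound[OF P0])
  also have "\<dots> \<le> degree Lam * (q - 1)"
    unfolding P_def by (intro degree_diff_le degree_power_le) simp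
  finally have A: "q ^ m - 1 \<le> degree Lam * (q - 1)" using card by (simp add: card_Diff_singleton)
  have "(q - 1) * (degree Lam + 1) \<le> (q - 1) * GS" using deg_lam by (rule mult_le_mono2)
  then have "(q - 1) * degree Lam + (q - 1) \<le> q ^ m - 1" using geomq by (simp add: add_mult_distrib2)
  then show False using A q2 by (simp add: mult.commute)
qed

lemma Lam_nz: "Lam \<noteq> 0"
proof -
  define S0 where "S0 = {0..<j}"
  have S0J: "S0 \<in> J" using jm unfolding S0_def by auto
  have "coeff Lam (\<Sum>i\<in>S0. q ^ i) = (\<Sum>S\<in>J. if S = S0 then 1 else 0)"
    unfolding coeff_lam
  proof (rule sum.cong[OF refl])
    fix S assume S: "S \<in> J"
    have "(\<Sum>i\<in>S. q ^ i) = (\<Sum>i\<in>S0. q ^ i) \<longleftrightarrow> S = S0"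
      using esum_inj[OF q2, of S m S0] S S0J by (auto simp: atLeast0LessThan)
    then show "(if (\<Sum>i\<in>S. q ^ i) = (\<Sum>i\<in>S0. q ^ i) then 1 else 0) = (if S = S0 then (1::'a) else 0)"
      by simp
  qed
  also have "\<dots> = 1" using S0J finJ by simp
  finally show ?thesis by auto
qed

lemma L_nonzero_val: "\<exists>x. L x \<noteq> 0"
proof (rule ccontr)
  assume "\<not> ?thesis"
  then have "{x. poly Lam x = 0} = UNIV" by (auto simp: L_def)
  then have "q ^ m \<le> degree Lam" using card_poly_roots_bound[OF Lam_nz] card by simp
  moreover have "GS < q ^ m" using geomq q2 by (metis esum_lt order_refl)
  ultimately show False using deg_lam by linarith
qed

lemma L_surj: "a \<in> F \<Longrightarrow> \<exists>x. L x = a"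
proof -
  assume aF: "a \<in> F"
  show ?thesis
  proof (cases "a = 0")
    case True then show ?thesis using L_0 by blast
  next
    case False
    obtain x0 where x0: "L x0 \<noteq> 0" using L_nonzero_val by blast
    define b where "b = a / L x0"
    have bF: "b \<in> F - {0}" unfolding b_def using aF L_F x0 False by (simp add: F_div)
    define pj where "pj c = c ^ j" for c :: 'a
    have "pj ` (F - {0}) = F - {0}"
    proof (rule endo_inj_surj)
      show "finite (F - {0})" by simp
      show "pj ` (F - {0}) \<subseteq> F - {0}" unfolding pj_def by (auto simp: F_pow)
      show "inj_on pj (F - {0})" unfolding pj_def inj_on_def using pow_j_inj by blast
    qed
    then have "b \<in> pj ` (F - {0})" using bF by simp
    then obtain c where c: "c \<in> F" "c ^ j = b" unfolding pj_def by blast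
    have "L (c * x0) = a" using L_hom[OF c(1)] c(2) x0 unfolding b_def by simp
    then show ?thesis by blast
  qed
qed


end

context ctx begin

lemma main:
  "permutes_set ([:0, 1:] * pcompose h (lambda_poly q m j)) UNIV
     \<longleftrightarrow> (poly h 0 \<noteq> 0 \<and> permutes_set ([:0, 1:] * h ^ j) (subfield_Fq q))"
proof -
  define f where "f x = x * poly h (L x)" for x
  define g where "g y = y * poly h y ^ j" for y
  have pf: "poly ([:0, 1:] * pcompose h (lambda_poly q m j)) = f"
    by (rule ext) (simp add: f_def poly_pcompose L_def)
  have pg: "poly ([:0, 1:] * h ^ j) = g"
    by (rule ext) (simp add: g_def)
  have gF: "y \<in> F \<Longrightarrow> g y \<in> F" for y unfolding g_def by (intro F_mult F_pow F_poly)
  have key: "L (f x) = g (L x)" for x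
  proof -
    have c: "poly h (L x) \<in> F" using F_poly[OF L_F] .
    show ?thesis unfolding f_def g_def using L_hom[OF c, of x] by (simp add: mult.commute)
  qed
  show ?thesis unfolding permutes_set_def pf pg
  proof
    assume bij: "bij_betw f UNIV UNIV"
    then have inj: "inj f" and surj: "surj f" by (auto simp: bij_betw_def)
    have h0: "poly h 0 \<noteq> 0"
    proof
      assume h0: "poly h 0 = 0"
      obtain x where x: "x \<noteq> 0" "L x = 0" using exists_zero by blast
      have "f x = f 0" unfolding f_def using x h0 by simp
      then show False using inj x(1) by (metis injD)
    qed
    have sur: "F \<subseteq> g ` F"
    proof
      fix a assume a: "a \<in> F"
      obtain z where z: "L z = a" using L_surj[OF a] by blast
      obtain x where x: "f x = z" using surj by (metis surjD)
      have "g (L x) = a" using key[of x] x z by simp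
      then show "a \<in> g ` F" using L_F by blast
    qed
    have img: "g ` F = F" using sur gF by blast
    have "inj_on g F" using finite_surj_inj[of F g] sur by simp
    then show "poly h 0 \<noteq> 0 \<and> bij_betw g F F" using h0 img by (simp add: bij_betw_def)
  next
    assume A: "poly h 0 \<noteq> 0 \<and> bij_betw g F F"
    then have ginj: "inj_on g F" by (simp add: bij_betw_def)
    have hnz: "poly h y \<noteq> 0" if y: "y \<in> F" for y
    proof (cases "y = 0")
      case True then show ?thesis using A by simp
    next
      case False
      have "g y \<noteq> g 0" using ginj y F_0 False by (metis inj_onD)
      then have "g y \<noteq> 0" by (simp add: g_def)
      then show ?thesis unfolding g_def using j1 by auto
    qed
    have "inj f"
    proof (rule injI)
      fix x x' assume e: "f x = f x'"
      have "g (L x) = g (L x')" using key[of x] key[of x'] e by simp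
      then have Lx: "L x = L x'" using ginj L_F by (metis inj_onD)
      have "x * poly h (L x) = x' * poly h (L x)" using e Lx unfolding f_def by simp
      then show "x = x'" using hnz[OF L_F[of x]] by simp
    qed
    then show "bij_betw f UNIV UNIV"
      using finite_UNIV_inj_surj[of f] by (simp add: bij_betw_def)
  qed
qed

end

theorem theorem3p1:
  fixes q m j :: nat and h :: "'a::{field,finite} poly"
  assumes "prime_power q"
    and "card (UNIV :: 'a set) = q ^ m"
    and "m > 1" and "1 \<le> j" and "j \<le> m - 1"
    and "gcd j (q - 1) = 1"
    and "\<forall>i. coeff h i \<in> subfield_Fq q"
  shows "permutes_set ([:0, 1:] * pcompose h (lambda_poly q m j)) UNIV
     \<longleftrightarrow> (poly h 0 \<noteq> 0 \<and> permutes_set ([:0, 1:] * h ^ j) (subfield_Fq q))"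
  by (rule ctx.main) (rule ctx.intro, fact+)


end
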